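(* Let $k$ be a field of characteristic not $2$ or $3$, let $\mathcal{A}\in k^{n+1}\otimes\operatorname{Sym}_2k^{m+1}$ be a tensor with slices $A_0,\dots,A_n$ such that $\det\mathcal{A}(\mathbf{x},\cdot,\cdot)$ is reduced and irreducible, and let $X=Z(\det\mathcal{A}(\mathbf{x},\cdot,\cdot))\subseteq\mathbb{P}^n$ be the associated symmetroid hypersurface. Then for every smooth point $x$ of $X$ we have $\theta_X(x)=\psi(\varphi(x))$. For $x\in\mathbb{P}^n(\bar k)$, the quadric $Z(\widehat\psi(x))\subseteq\mathbb{P}^m$ is singular if and only if $x\in X(\bar k)$; furthermore, for any $x\in X(\bar k)$ the quadric $Z(\widehat\psi(x))$ is singular at the point $\varphi(x)$ (whenever $\varphi(x)$ is defined). For any $z=[H]\in\widehat{\mathbb{P}}^n(\bar k)$, the fibre $\psi^{-1}(z)$ is the base locus of the linear space of quadrics $\widehat\psi(H)$, i.e. of $\widehat\psi|_H:H\to\mathbb{P}H^0(\mathbb{P}^m,\mathcal{O}_{\mathbb{P}^m}(2))$.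
   Context: $\mathcal{A}$ is viewed as an $(n+1)$-tuple of symmetric $(m+1)\times(m+1)$ matrices $A_0,\dots,A_n$, and $\mathcal{A}(\mathbf{x},\cdot,\cdot)=\sum x_iA_i$. The maps are: $\widehat\psi:\mathbb{P}^n\to\mathbb{P}H^0(\mathbb{P}^m,\mathcal{O}_{\mathbb{P}^m}(2))$, $x\mapsto$ the quadratic form $\mathbf{y}^T\mathcal{A}(x,\cdot,\cdot)\mathbf{y}$; $\psi:\mathbb{P}^m\dashrightarrow\widehat{\mathbb{P}}^n$, $y\mapsto(y^TA_0y:\dots:y^TA_ny)$, where points of $\widehat{\mathbb{P}}^n$ are identified with hyperplanes of $\mathbb{P}^n$; the kernel map $\varphi:X\dashrightarrow\mathbb{P}^m$, $x\mapsto\mathbb{P}(\ker\mathcal{A}(x,\cdot,\cdot))$, defined where the corank is $1$; and the Gauss map $\theta_X:X\dashrightarrow\widehat{\mathbb{P}}^n$, $x\mapsto T_xX$, defined on smooth points. *)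

theory Defs
  imports "HOL-Analysis.Analysis" "HOL-Library.Poly_Mapping"
    "HOL-Computational_Algebra.Polynomial" "HOL-Computational_Algebra.Factorial_Ring"
    "HOL-Computational_Algebra.Squarefree"
begin

text \<open>Multivariate polynomials in variables indexed by 'v with coefficients in 'a,
  represented as finitely supported maps from monomials (exponent vectors) to coefficients.\<close>
type_synonym ('v, 'a) mpoly = "('v \<Rightarrow>\<^sub>0 nat) \<Rightarrow>\<^sub>0 'a"

text \<open>Evaluation of a polynomial with coefficients in k at a point with coordinates in K,
  where sigma : k -> K is the field embedding.\<close>
definition mpeval :: "('a \<Rightarrow> 'b::comm_ring_1) \<Rightarrow> ('v::finite, 'a::zero) mpoly \<Rightarrow> 'b^'v \<Rightarrow> 'b" where
  "mpeval \<sigma> f x = (\<Sum>\<alpha>\<in>Poly_Mapping.keys f. \<sigma> (Poly_Mapping.lookup f \<alpha>) * (\<Prod>i\<in>UNIV. x $ i ^ Poly_Mapping.lookup \<alpha> i))"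

definition mpderiv_eval :: "('a \<Rightarrow> 'b::comm_ring_1) \<Rightarrow> 'v \<Rightarrow> ('v::finite, 'a::zero) mpoly \<Rightarrow> 'b^'v \<Rightarrow> 'b" where
  "mpderiv_eval \<sigma> j f x = (\<Sum>\<alpha>\<in>Poly_Mapping.keys f. of_nat (Poly_Mapping.lookup \<alpha> j) * \<sigma> (Poly_Mapping.lookup f \<alpha>) *
      (\<Prod>i\<in>UNIV. x $ i ^ (if i = j then Poly_Mapping.lookup \<alpha> i - 1 else Poly_Mapping.lookup \<alpha> i)))"

text \<open>Gradient vector of f at x (coordinates of the tangent hyperplane at a smooth point).\<close>
definition grad_vec :: "('a \<Rightarrow> 'b::comm_ring_1) \<Rightarrow> ('v::finite, 'a::zero) mpoly \<Rightarrow> 'b^'v \<Rightarrow> 'b^'v" where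
  "grad_vec \<sigma> f x = (\<chi> j. mpderiv_eval \<sigma> j f x)"

definition smooth_point :: "('a \<Rightarrow> 'b::field) \<Rightarrow> ('v::finite, 'a::zero) mpoly \<Rightarrow> 'b^'v \<Rightarrow> bool" where
  "smooth_point \<sigma> f x \<longleftrightarrow> x \<noteq> 0 \<and> mpeval \<sigma> f x = 0 \<and> (\<exists>j. mpderiv_eval \<sigma> j f x \<noteq> 0)"

definition pencil_poly :: "('n::finite \<Rightarrow> 'k::comm_ring_1^'m^'m) \<Rightarrow> (('n, 'k) mpoly)^'m^'m" where
  "pencil_poly A = (\<chi> r c. \<Sum>i\<in>UNIV. Poly_Mapping.single (Poly_Mapping.single i 1) (A i $ r $ c))"

definition det_poly :: "('n::finite \<Rightarrow> 'k::comm_ring_1^'m::finite^'m) \<Rightarrow> ('n, 'k) mpoly" where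
  "det_poly A = det (pencil_poly A)"

definition pencil :: "('k \<Rightarrow> 'K::comm_ring_1) \<Rightarrow> ('n::finite \<Rightarrow> 'k^'m^'m) \<Rightarrow> 'K^'n \<Rightarrow> 'K^'m^'m" where
  "pencil \<sigma> A x = (\<chi> r c. \<Sum>i\<in>UNIV. x $ i * \<sigma> (A i $ r $ c))"

text \<open>The symmetroid X = Z(det A(x,.,.)), as set of (nonzero representatives of) K-points.\<close>
definition symmetroid :: "('k \<Rightarrow> 'K::field) \<Rightarrow> ('n::finite \<Rightarrow> 'k::comm_ring_1^'m::finite^'m) \<Rightarrow> ('K^'n) set" where
  "symmetroid \<sigma> A = {x. x \<noteq> 0 \<and> mpeval \<sigma> (det_poly A) x = 0}"

text \<open>The quadratic form y^T M y as a polynomial in y (this is psi-hat(x) for M = A(x,.,.)).\<close>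
definition quadric_poly :: "'K::comm_ring_1^'m::finite^'m \<Rightarrow> ('m, 'K) mpoly" where
  "quadric_poly M = (\<Sum>r\<in>UNIV. \<Sum>c\<in>UNIV.
      Poly_Mapping.single (Poly_Mapping.single r 1 + Poly_Mapping.single c 1) (M $ r $ c))"

definition quadric_sing_point :: "'K::field^'m::finite^'m \<Rightarrow> 'K^'m \<Rightarrow> bool" where
  "quadric_sing_point M y \<longleftrightarrow> y \<noteq> 0 \<and> mpeval id (quadric_poly M) y = 0 \<and>
      (\<forall>j. mpderiv_eval id j (quadric_poly M) y = 0)"

definition singular_quadric :: "'K::field^'m::finite^'m \<Rightarrow> bool" where
  "singular_quadric M \<longleftrightarrow> (\<exists>y. quadric_sing_point M y)"

definition psi :: "('k \<Rightarrow> 'K::comm_ring_1) \<Rightarrow> ('n::finite \<Rightarrow> 'k^'m::finite^'m) \<Rightarrow> 'K^'m \<Rightarrow> 'K^'n" where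
  "psi \<sigma> A y = (\<chi> i. \<Sum>r\<in>UNIV. \<Sum>c\<in>UNIV. y $ r * \<sigma> (A i $ r $ c) * y $ c)"

definition proj_eq :: "'K::field^'n \<Rightarrow> 'K^'n \<Rightarrow> bool" where
  "proj_eq u v \<longleftrightarrow> u \<noteq> 0 \<and> v \<noteq> 0 \<and> (\<exists>c. c \<noteq> 0 \<and> u = c *s v)"

end

theory Submission
  imports Defs
begin


definition mon :: "('v::finite \<Rightarrow>\<^sub>0 nat) \<Rightarrow> 'b::comm_ring_1^'v \<Rightarrow> 'b" where
  "mon \<alpha> x = (\<Prod>i\<in>UNIV. x $ i ^ Poly_Mapping.lookup \<alpha> i)"

lemma mon_add: "mon (\<alpha> + \<beta>) x = mon \<alpha> x * mon \<beta> x"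
  by (simp add: mon_def lookup_add power_add prod.distrib)

lemma mon_zero[simp]: "mon 0 x = 1"
  by (simp add: mon_def)

lemma mpeval_superset:
  assumes "\<tau> 0 = 0" "finite S" "Poly_Mapping.keys f \<subseteq> S"
  shows "mpeval \<tau> f x = (\<Sum>\<alpha>\<in>S. \<tau> (Poly_Mapping.lookup f \<alpha>) * mon \<alpha> x)"
  unfolding mpeval_def mon_def
  by (rule sum.mono_neutral_left) (use assms in \<open>auto simp: in_keys_iff\<close>)

locale hom_ctx =
  fixes \<tau> :: "'a::comm_ring_1 \<Rightarrow> 'b::comm_ring_1"
  assumes hadd: "\<And>a b. \<tau> (a + b) = \<tau> a + \<tau> b"
    and hmult: "\<And>a b. \<tau> (a * b) = \<tau> a * \<tau> b"
    and hone: "\<tau> 1 = 1"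
begin

lemma hzero[simp]: "\<tau> 0 = 0"
  using hadd[of 0 0] by simp

lemma hneg: "\<tau> (- a) = - \<tau> a"
  using hadd[of a "-a"] minus_unique[of "\<tau> a" "\<tau> (-a)"] by simp

lemma mpeval_add: "mpeval \<tau> (f + g) x = mpeval \<tau> f x + mpeval \<tau> g x"
proof -
  let ?S = "Poly_Mapping.keys f \<union> Poly_Mapping.keys g"
  have fin: "finite ?S" by simp
  have "mpeval \<tau> (f + g) x = (\<Sum>\<alpha>\<in>?S. \<tau> (Poly_Mapping.lookup (f+g) \<alpha>) * mon \<alpha> x)"
    by (rule mpeval_superset) (use keys_add[of f g] in auto)
  also have "\<dots> = (\<Sum>\<alpha>\<in>?S. \<tau> (Poly_Mapping.lookup f \<alpha>) * mon \<alpha> x) + (\<Sum>\<alpha>\<in>?S. \<tau> (Poly_Mapping.lookup g \<alpha>) * mon \<alpha> x)"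
    by (simp add: lookup_add hadd distrib_right sum.distrib)
  also have "\<dots> = mpeval \<tau> f x + mpeval \<tau> g x"
    by (simp add: mpeval_superset[where \<tau>=\<tau>, OF hzero fin])
  finally show ?thesis .
qed

lemma mpeval_zero[simp]: "mpeval \<tau> 0 x = 0"
  by (simp add: mpeval_def)

lemma mpeval_sum: "mpeval \<tau> (\<Sum>i\<in>I. f i) x = (\<Sum>i\<in>I. mpeval \<tau> (f i) x)"
  by (induction I rule: infinite_finite_induct) (auto simp: mpeval_add)

lemma mpeval_single: "mpeval \<tau> (Poly_Mapping.single \<alpha> c) x = \<tau> c * mon \<alpha> x"
  by (subst mpeval_superset[where \<tau>=\<tau>, OF hzero, of "{\<alpha>}"]) auto

lemma mpeval_neg: "mpeval \<tau> (- f) x = - mpeval \<tau> f x"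
  using mpeval_add[of f "-f" x] minus_unique[of "mpeval \<tau> f x" "mpeval \<tau> (-f) x"] by simp

lemma poly_mapping_monomials:
  "f = (\<Sum>\<alpha>\<in>Poly_Mapping.keys f. Poly_Mapping.single \<alpha> (Poly_Mapping.lookup f \<alpha>))"
  by (rule poly_mapping_eqI) (auto simp: lookup_sum lookup_single when_def in_keys_iff)

lemma mpeval_mult: "mpeval \<tau> (f * g) x = mpeval \<tau> f x * mpeval \<tau> g x"
proof -
  have "f * g = (\<Sum>\<alpha>\<in>Poly_Mapping.keys f. Poly_Mapping.single \<alpha> (Poly_Mapping.lookup f \<alpha>)) *
     (\<Sum>\<beta>\<in>Poly_Mapping.keys g. Poly_Mapping.single \<beta> (Poly_Mapping.lookup g \<beta>))"
    using poly_mapping_monomials[of f] poly_mapping_monomials[of g] by simp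
  also have "\<dots> = (\<Sum>\<alpha>\<in>Poly_Mapping.keys f. \<Sum>\<beta>\<in>Poly_Mapping.keys g.
     Poly_Mapping.single (\<alpha> + \<beta>) (Poly_Mapping.lookup f \<alpha> * Poly_Mapping.lookup g \<beta>))"
    by (simp add: sum_product mult_single)
  finally have "mpeval \<tau> (f * g) x = (\<Sum>\<alpha>\<in>Poly_Mapping.keys f. \<Sum>\<beta>\<in>Poly_Mapping.keys g.
     \<tau> (Poly_Mapping.lookup f \<alpha>) * mon \<alpha> x * (\<tau> (Poly_Mapping.lookup g \<beta>) * mon \<beta> x))"
    by (simp add: mpeval_sum mpeval_single hmult mon_add ac_simps)
  also have "\<dots> = mpeval \<tau> f x * mpeval \<tau> g x"
    by (simp add: sum_product mpeval_def mon_def)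
  finally show ?thesis .
qed

lemma mpeval_one[simp]: "mpeval \<tau> 1 x = 1"
  using mpeval_single[of 0 1 x] by (simp add: hone)

lemma mpeval_prod: "mpeval \<tau> (\<Prod>i\<in>I. f i) x = (\<Prod>i\<in>I. mpeval \<tau> (f i) x)"
  by (induction I rule: infinite_finite_induct) (auto simp: mpeval_mult)

lemma mpeval_det:
  "mpeval \<tau> (det P) x = det (\<chi> r c. mpeval \<tau> (P $ r $ c) x)"
proof -
  have s: "mpeval \<tau> (of_int (sign p)) x = of_int (sign p)" for p
    by (simp add: sign_def mpeval_neg)
  show ?thesis
    unfolding det_def by (simp add: mpeval_sum mpeval_mult mpeval_prod s)
qed

end



lemma coeff_mult_1: "coeff (p * q) 1 = coeff p 0 * coeff q 1 + coeff p 1 * coeff q 0"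
  by (simp add: coeff_mult numeral_2_eq_2 atMost_Suc ac_simps)

lemma coeff_mult_Suc0: "coeff (p * q) (Suc 0) = coeff p 0 * coeff q (Suc 0) + coeff p (Suc 0) * coeff q 0"
  using coeff_mult_1[of p q] by simp

lemma coeff_prod_0: "coeff (\<Prod>i\<in>S. p i) 0 = (\<Prod>i\<in>S. coeff (p i) 0)"
  by (induction S rule: infinite_finite_induct) (auto simp: coeff_mult_0)

lemma coeff_prod_1:
  fixes p :: "'i \<Rightarrow> 'a::comm_ring_1 poly"
  assumes "finite S"
  shows "coeff (\<Prod>i\<in>S. p i) 1 = (\<Sum>k\<in>S. coeff (p k) 1 * (\<Prod>i\<in>S-{k}. coeff (p i) 0))"
  using assms
proof (induction S rule: finite_induct)
  case empty
  then show ?case by simp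
next
  case (insert a S)
  have e: "insert a S - {k} = insert a (S - {k})" if "k \<in> S" for k
    using that insert by auto
  have "(\<Sum>k\<in>S. coeff (p k) 1 * (\<Prod>i\<in>insert a S-{k}. coeff (p i) 0))
     = coeff (p a) 0 * (\<Sum>k\<in>S. coeff (p k) 1 * (\<Prod>i\<in>S-{k}. coeff (p i) 0))"
    by (simp add: sum_distrib_left e insert ac_simps cong: sum.cong)
  moreover have "insert a S - {a} = S" using insert by auto
  ultimately show ?case
    using insert by (simp add: coeff_mult_Suc0 coeff_prod_0 ac_simps)
qed

lemma coeff_power_1:
  fixes p :: "'a::comm_ring_1 poly"
  shows "coeff (p ^ n) 1 = of_nat n * coeff p 1 * coeff p 0 ^ (n - 1)"
proof (induction n)
  case 0
  then show ?case by simp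
next
  case (Suc n)
  show ?case
  proof (cases n)
    case 0
    then show ?thesis by simp
  next
    case (Suc m)
    have "coeff (p ^ Suc n) 1 = coeff p 0 * coeff (p ^ n) 1 + coeff p 1 * coeff (p ^ n) 0"
      by (simp only: power_Suc coeff_mult_1)
    also have "\<dots> = coeff p 0 * (of_nat n * coeff p 1 * coeff p 0 ^ m) + coeff p 1 * coeff p 0 ^ Suc m"
      using Suc.IH Suc by (simp add: coeff_0_power coeff_mult_0)
    also have "\<dots> = of_nat (Suc n) * coeff p 1 * coeff p 0 ^ n"
      using Suc by (simp add: algebra_simps)
    finally show ?thesis by simp
  qed
qed

lemma coeff_power_0:
  fixes p :: "'a::comm_ring_1 poly"
  shows "coeff (p ^ n) 0 = coeff p 0 ^ n"
  by (simp add: coeff_0_power)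



declare One_nat_def[simp del]

lemma coeff_pCons_1[simp]: "coeff (pCons a p) 1 = coeff p 0"
  by (simp add: One_nat_def)

lemma coeff_const_mult: "coeff ([:c:] * p) n = c * coeff p n"
  by simp

lemma coeff_of_int_mult: "coeff (of_int s * p) n = of_int s * coeff p n"
  by (simp add: of_int_poly)

lemma coeff_det_1:
  fixes P :: "'a::comm_ring_1 poly^'n::finite^'n"
  shows "coeff (det P) 1 = (\<Sum>k\<in>UNIV. det (\<chi> i. if i = k then (\<chi> c. coeff (P$k$c) 1) else (\<chi> c. coeff (P$i$c) 0)))"
proof -
  have "coeff (det P) 1 = (\<Sum>p\<in>{p. p permutes UNIV}. of_int (sign p) *
      (\<Sum>k\<in>UNIV. coeff (P$k$p k) 1 * (\<Prod>i\<in>UNIV-{k}. coeff (P$i$p i) 0)))"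
    unfolding det_def by (simp add: coeff_sum coeff_of_int_mult coeff_prod_1)
  also have "\<dots> = (\<Sum>k\<in>UNIV. \<Sum>p\<in>{p. p permutes UNIV}. of_int (sign p) *
      (coeff (P$k$p k) 1 * (\<Prod>i\<in>UNIV-{k}. coeff (P$i$p i) 0)))"
    by (simp add: sum_distrib_left sum.swap[of _ "{p. p permutes UNIV}"])
  also have "\<dots> = (\<Sum>k\<in>UNIV. det (\<chi> i. if i = k then (\<chi> c. coeff (P$k$c) 1) else (\<chi> c. coeff (P$i$c) 0)))"
  proof (rule sum.cong[OF refl])
    fix k
    show "(\<Sum>p\<in>{p. p permutes UNIV}. of_int (sign p) *
      (coeff (P$k$p k) 1 * (\<Prod>i\<in>UNIV-{k}. coeff (P$i$p i) 0))) =
      det (\<chi> i. if i = k then (\<chi> c. coeff (P$k$c) 1) else (\<chi> c. coeff (P$i$c) 0))"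
      unfolding det_def
    proof (rule sum.cong[OF refl])
      fix p
      have "(\<Prod>i\<in>UNIV. (\<chi> i. if i = k then (\<chi> c. coeff (P$k$c) 1) else (\<chi> c. coeff (P$i$c) 0)) $ i $ p i)
         = coeff (P$k$p k) 1 * (\<Prod>i\<in>UNIV-{k}. coeff (P$i$p i) 0)"
      proof -
        have e: "(\<Prod>i\<in>UNIV-{k}. (\<chi> i. if i = k then (\<chi> c. coeff (P$k$c) 1) else (\<chi> c. coeff (P$i$c) 0)) $ i $ p i)
          = (\<Prod>i\<in>UNIV-{k}. coeff (P$i$p i) 0)"
          by (rule prod.cong) auto
        show ?thesis by (simp add: prod.remove[of UNIV k] e)
      qed
      then show "of_int (sign p) * (coeff (P$k$p k) 1 * (\<Prod>i\<in>UNIV-{k}. coeff (P$i$p i) 0)) =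
        of_int (sign p) * (\<Prod>i\<in>UNIV. (\<chi> i. if i = k then (\<chi> c. coeff (P$k$c) 1) else (\<chi> c. coeff (P$i$c) 0)) $ i $ p i)"
        by simp
    qed
  qed
  finally show ?thesis .
qed

definition zpt :: "'K::comm_ring_1^'n \<Rightarrow> 'n \<Rightarrow> 'K poly^'n" where
  "zpt x j = (\<chi> i. [:x$i, if i = j then 1 else 0:])"

lemma coeff_mon_zpt_1:
  fixes x :: "'K::comm_ring_1^'n::finite"
  shows "coeff (mon \<alpha> (zpt x j)) 1 = of_nat (Poly_Mapping.lookup \<alpha> j) *
     (\<Prod>i\<in>UNIV. x $ i ^ (if i = j then Poly_Mapping.lookup \<alpha> i - 1 else Poly_Mapping.lookup \<alpha> i))"
proof -
  let ?p = "\<lambda>i. (zpt x j $ i) ^ Poly_Mapping.lookup \<alpha> i"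
  have c0: "coeff (?p i) 0 = x $ i ^ Poly_Mapping.lookup \<alpha> i" for i
    by (simp add: coeff_0_power zpt_def)
  have c1: "coeff (?p i) 1 = (if i = j then of_nat (Poly_Mapping.lookup \<alpha> j) * x $ j ^ (Poly_Mapping.lookup \<alpha> j - 1) else 0)" for i
    by (simp add: coeff_power_1 zpt_def)
  have "coeff (mon \<alpha> (zpt x j)) 1 = (\<Sum>k\<in>UNIV. coeff (?p k) 1 * (\<Prod>i\<in>UNIV-{k}. coeff (?p i) 0))"
    unfolding mon_def by (rule coeff_prod_1) simp
  also have "\<dots> = of_nat (Poly_Mapping.lookup \<alpha> j) * x $ j ^ (Poly_Mapping.lookup \<alpha> j - 1) *
       (\<Prod>i\<in>UNIV-{j}. x $ i ^ Poly_Mapping.lookup \<alpha> i)"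
    by (simp add: c0 c1 if_distrib[of "\<lambda>u. u * _"] cong: if_cong)
  also have "\<dots> = of_nat (Poly_Mapping.lookup \<alpha> j) *
     (\<Prod>i\<in>UNIV. x $ i ^ (if i = j then Poly_Mapping.lookup \<alpha> i - 1 else Poly_Mapping.lookup \<alpha> i))"
  proof -
    have e: "(\<Prod>i\<in>UNIV-{j}. x $ i ^ (if i = j then Poly_Mapping.lookup \<alpha> i - 1 else Poly_Mapping.lookup \<alpha> i))
       = (\<Prod>i\<in>UNIV-{j}. x $ i ^ Poly_Mapping.lookup \<alpha> i)"
      by (rule prod.cong) auto
    show ?thesis by (simp add: prod.remove[of UNIV j] e)
  qed
  finally show ?thesis .
qed

lemma hom_ctx_const:
  assumes "\<forall>a b. \<sigma> (a + b) = \<sigma> a + \<sigma> b" "\<forall>a b. \<sigma> (a * b) = \<sigma> a * \<sigma> b" "\<sigma> 1 = 1"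
  shows "hom_ctx (\<lambda>a. [:\<sigma> a:])"
  by unfold_locales (use assms in auto)

lemma hom_ctx_id: "hom_ctx \<sigma>" if "\<forall>a b. \<sigma> (a + b) = \<sigma> a + \<sigma> b" "\<forall>a b. \<sigma> (a * b) = \<sigma> a * \<sigma> b" "\<sigma> 1 = 1"
  by unfold_locales (use that in auto)

lemma mpderiv_via_poly:
  fixes \<sigma> :: "'a::comm_ring_1 \<Rightarrow> 'K::comm_ring_1" and x :: "'K^'v::finite"
  shows "coeff (mpeval (\<lambda>a. [:\<sigma> a:]) f (zpt x j)) 1 = mpderiv_eval \<sigma> j f x"
  unfolding mpeval_def mpderiv_eval_def
  by (simp add: coeff_sum coeff_mon_zpt_1 mon_def[symmetric] ac_simps)

lemma (in hom_ctx) mpeval_pencil_entry: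
  fixes w :: "'b^'n::finite"
  shows "mpeval \<tau> (pencil_poly A $ r $ c) w = (\<Sum>i\<in>UNIV. \<tau> (A i $ r $ c) * w $ i)"
proof -
  have m: "mon (Poly_Mapping.single i 1) w = w $ i" for i
  proof -
    have "mon (Poly_Mapping.single i 1) w = (\<Prod>l\<in>UNIV. if l = i then w $ l else 1)"
      unfolding mon_def by (rule prod.cong) (auto simp: lookup_single when_def)
    then show ?thesis by simp
  qed
  show ?thesis
    unfolding pencil_poly_def by (simp add: mpeval_sum mpeval_single m)
qed



definition rr :: "'a^'m^'m \<Rightarrow> 'm \<Rightarrow> 'a^'m \<Rightarrow> 'a^'m^'m" where
  "rr M k v = (\<chi> i. if i = k then v else M $ i)"

lemma rr_swap:
  fixes M :: "'a::field^'m::finite^'m"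
  assumes sym: "transpose M = M" and My: "M *v y = 0" and yl: "y $ l \<noteq> 0"
  shows "y $ l * det (rr M k v) = y $ k * det (rr M l v)"
proof (cases "k = l")
  case True
  then show ?thesis by simp
next
  case kl: False
  let ?N = "rr M k v"
  let ?x = "(\<Sum>i\<in>UNIV-{l,k}. (y $ i / y $ l) *s M $ i)"
  have rowN: "row i ?N = (if i = k then v else M $ i)" for i
    by (simp add: rr_def row_def vec_eq_iff)
  have xspan: "?x \<in> vec.span {row j ?N | j. j \<noteq> l}"
  proof (rule vec.span_sum)
    fix i assume "i \<in> UNIV - {l, k}"
    then have "M $ i \<in> {row j ?N | j. j \<noteq> l}"
      by (intro CollectI exI[of _ i]) (use rowN[of i] in auto)
    then show "(y $ i / y $ l) *s M $ i \<in> vec.span {row j ?N | j. j \<noteq> l}"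
      by (intro vec.span_scale vec.span_base)
  qed
  have colsum: "(\<Sum>i\<in>UNIV. y $ i * M $ i $ d) = 0" for d
  proof -
    have "(\<Sum>i\<in>UNIV. y $ i * M $ i $ d) = (M *v y) $ d"
      using sym by (simp add: matrix_vector_mult_def vec_eq_iff transpose_def ac_simps)
    then show ?thesis using My by simp
  qed
  have rowl: "M $ l + ?x = (- (y $ k / y $ l)) *s M $ k"
  proof (subst vec_eq_iff, intro allI)
    fix d
    have fin: "finite (UNIV - {l, k})" by simp
    have "(\<Sum>i\<in>UNIV. y $ i * M $ i $ d) = y $ l * M $ l $ d + y $ k * M $ k $ d +
           (\<Sum>i\<in>UNIV-{l,k}. y $ i * M $ i $ d)"
    proof -
      have "UNIV = insert l (insert k (UNIV - {l,k}))" by auto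
      then have "(\<Sum>i\<in>UNIV. y $ i * M $ i $ d) = (\<Sum>i\<in>insert l (insert k (UNIV - {l,k})). y $ i * M $ i $ d)"
        by simp
      also have "\<dots> = y $ l * M $ l $ d + y $ k * M $ k $ d + (\<Sum>i\<in>UNIV-{l,k}. y $ i * M $ i $ d)"
        using kl by (simp add: sum.insert[OF _] fin)
      finally show ?thesis .
    qed
    then have e: "y $ l * M $ l $ d + (\<Sum>i\<in>UNIV-{l,k}. y $ i * M $ i $ d) = - (y $ k * M $ k $ d)"
      using colsum[of d] by (simp add: eq_neg_iff_add_eq_0 ac_simps)
    have "(M $ l + ?x) $ d = M $ l $ d + (\<Sum>i\<in>UNIV-{l,k}. y $ i * M $ i $ d) / y $ l"
      by (simp add: sum_divide_distrib)
    also have "\<dots> = (y $ l * M $ l $ d + (\<Sum>i\<in>UNIV-{l,k}. y $ i * M $ i $ d)) / y $ l"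
      using yl by (simp add: field_simps)
    also have "\<dots> = (- (y $ k / y $ l) *s M $ k) $ d"
      by (simp only: e) simp
    finally show "(M $ l + ?x) $ d = (- (y $ k / y $ l) *s M $ k) $ d" .
  qed
  have "det ?N = det (\<chi> r. if r = l then row l ?N + ?x else row r ?N)"
    by (rule det_row_span[OF xspan, symmetric])
  also have "(\<chi> r. if r = l then row l ?N + ?x else row r ?N) =
      (\<chi> r. if r = l then (- (y $ k / y $ l)) *s M $ k else row r ?N)"
    using rowl kl by (simp add: rowN vec_eq_iff)
  also have "det \<dots> = (- (y $ k / y $ l)) * det (\<chi> r. if r = l then M $ k else row r ?N)"
    using det_row_mul[of l "- (y $ k / y $ l)" "\<lambda>_. M $ k" "\<lambda>r. row r ?N"] by simp
  also have "det (\<chi> r. if r = l then M $ k else row r ?N) = - det (rr M l v)"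
  proof -
    let ?N' = "(\<chi> r. if r = l then M $ k else row r ?N)"
    have p: "Transposition.transpose k l permutes (UNIV :: 'm set)"
      by (rule permutes_swap_id) auto
    have "(\<chi> i. ?N' $ Transposition.transpose k l i) = rr M l v"
      using kl by (simp add: rr_def row_def vec_eq_iff Transposition.transpose_def)
    then have "det (rr M l v) = of_int (sign (Transposition.transpose k l)) * det ?N'"
      using det_permute_rows[OF p, of ?N'] by simp
    then show ?thesis using kl by (simp add: sign_swap_id)
  qed
  finally have "det ?N = (y $ k / y $ l) * det (rr M l v)" by simp
  then show ?thesis using yl by (simp add: field_simps)
qed



definition Qm :: "'a::comm_ring_1^'m^'m \<Rightarrow> 'm \<Rightarrow> 'm \<Rightarrow> 'a^'m^'m" where
  "Qm M k c = (\<chi> i d. if i = k then (if d = c then 1 else 0) else if d = c then 0 else M $ i $ d)"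

lemma det_rr_axis_Qm:
  fixes M :: "'a::comm_ring_1^'m::finite^'m"
  shows "det (rr M k (axis c 1)) = det (Qm M k c)"
  unfolding det_def
proof (rule sum.cong[OF refl])
  fix p assume "p \<in> {p. p permutes (UNIV :: 'm set)}"
  then have p: "p permutes (UNIV :: 'm set)" by simp
  have "(\<Prod>i\<in>UNIV. rr M k (axis c 1) $ i $ p i) = (\<Prod>i\<in>UNIV. Qm M k c $ i $ p i)"
  proof (cases "p k = c")
    case True
    have "p i \<noteq> c" if "i \<noteq> k" for i
      using True that permutes_inj[OF p] by (metis inj_eq)
    then show ?thesis using True
      by (intro prod.cong) (auto simp: rr_def Qm_def axis_def)
  next
    case False
    have "(\<Prod>i\<in>UNIV. rr M k (axis c 1) $ i $ p i) = 0"
      by (rule prod_zero, simp, rule bexI[of _ k]) (use False in \<open>simp_all add: rr_def axis_def\<close>)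
    moreover have "(\<Prod>i\<in>UNIV. Qm M k c $ i $ p i) = 0"
      by (rule prod_zero, simp, rule bexI[of _ k]) (use False in \<open>simp_all add: Qm_def\<close>)
    ultimately show ?thesis by simp
  qed
  then show "of_int (sign p) * (\<Prod>i\<in>UNIV. rr M k (axis c 1) $ i $ p i) =
             of_int (sign p) * (\<Prod>i\<in>UNIV. Qm M k c $ i $ p i)" by simp
qed



lemma cofactor_sym:
  fixes M :: "'a::comm_ring_1^'m::finite^'m"
  assumes sym: "transpose M = M"
  shows "det (rr M k (axis c 1)) = det (rr M c (axis k 1))"
proof -
  have "transpose (Qm M c k) = Qm (transpose M) k c"
    by (auto simp: transpose_def Qm_def vec_eq_iff)
  then have "det (Qm M c k) = det (Qm M k c)"
    using sym by (metis det_transpose)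
  then show ?thesis by (simp add: det_rr_axis_Qm)
qed

lemma vec_axis_expand: "(\<Sum>c\<in>UNIV. (v $ c) *s axis c (1::'a::comm_ring_1)) = (v :: 'a^'m::finite)"
  by (simp add: vec_eq_iff sum_component axis_def if_distrib[of "\<lambda>u. _ * u"] cong: if_cong)

lemma det_rr_expand:
  fixes M :: "'a::comm_ring_1^'m::finite^'m"
  shows "det (rr M k v) = (\<Sum>c\<in>UNIV. v $ c * det (rr M k (axis c 1)))"
proof -
  have "det (rr M k v) = det (\<chi> i. if i = k then (\<Sum>c\<in>UNIV. (v $ c) *s axis c 1) else M $ i)"
    by (simp only: rr_def vec_axis_expand)
  also have "\<dots> = (\<Sum>c\<in>UNIV. det (\<chi> i. if i = k then (v $ c) *s axis c 1 else M $ i))"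
    by (rule det_linear_row_sum) simp
  also have "\<dots> = (\<Sum>c\<in>UNIV. v $ c * det (rr M k (axis c 1)))"
    unfolding rr_def
    by (rule sum.cong[OF refl]) (rule det_row_mul[of k "v $ _" "\<lambda>_. axis _ 1" "\<lambda>i. M $ i"])
  finally show ?thesis .
qed

lemma cofactor_rank1:
  fixes M :: "'a::field^'m::finite^'m"
  assumes sym: "transpose M = M" and My: "M *v y = 0" and y0: "y \<noteq> 0"
  shows "\<exists>lam. \<forall>k c. det (rr M k (axis c 1)) = lam * y $ k * y $ c"
proof -
  obtain l where yl: "y $ l \<noteq> 0" using y0 by (auto simp: vec_eq_iff)
  define w where "w c = det (rr M l (axis c 1)) / y $ l" for c
  have C: "det (rr M k (axis c 1)) = y $ k * w c" for k c
  proof -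
    have "det (rr M k (axis c 1)) = (y $ l * det (rr M k (axis c 1))) / y $ l"
      using yl by simp
    also have "\<dots> = (y $ k * det (rr M l (axis c 1))) / y $ l"
      by (simp only: rr_swap[OF sym My yl, of k "axis c 1"])
    also have "\<dots> = y $ k * w c"
      by (simp only: w_def times_divide_eq_right)
    finally show ?thesis .
  qed
  have wc: "w c = y $ c * (w l / y $ l)" for c
  proof -
    have eq: "y $ l * w c = y $ c * w l"
      using C[of l c] C[of c l] cofactor_sym[OF sym, of l c] by simp
    have "w c = (y $ l * w c) / y $ l" using yl by simp
    also have "\<dots> = (y $ c * w l) / y $ l" by (simp only: eq)
    finally show ?thesis by simp
  qed
  have "det (rr M k (axis c 1)) = (w l / y $ l) * y $ k * y $ c" for k c
  proof -
    have "det (rr M k (axis c 1)) = y $ k * w c" by (rule C)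
    also have "\<dots> = y $ k * (y $ c * (w l / y $ l))" by (subst wc[of c]) (rule refl)
    finally show ?thesis by (simp only: mult.commute mult.left_commute mult.assoc)
  qed
  then show ?thesis by blast
qed

lemma deriv_rank1:
  fixes M :: "'a::field^'m::finite^'m"
  assumes sym: "transpose M = M" and My: "M *v y = 0" and y0: "y \<noteq> 0"
  shows "\<exists>lam. \<forall>B. (\<Sum>k\<in>UNIV. det (rr M k (B $ k))) = lam * (\<Sum>r\<in>UNIV. \<Sum>c\<in>UNIV. y $ r * B $ r $ c * y $ c)"
proof -
  obtain lam where L: "\<And>k c. det (rr M k (axis c 1)) = lam * y $ k * y $ c"
    using cofactor_rank1[OF assms] by blast
  have "(\<Sum>k\<in>UNIV. det (rr M k (B $ k))) = lam * (\<Sum>r\<in>UNIV. \<Sum>c\<in>UNIV. y $ r * B $ r $ c * y $ c)" for B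
  proof -
    have "det (rr M k (B $ k)) = lam * (\<Sum>c\<in>UNIV. y $ k * B $ k $ c * y $ c)" for k
    proof -
      have "det (rr M k (B $ k)) = (\<Sum>c\<in>UNIV. B $ k $ c * det (rr M k (axis c 1)))"
        by (rule det_rr_expand)
      also have "\<dots> = (\<Sum>c\<in>UNIV. B $ k $ c * (lam * y $ k * y $ c))"
        by (simp only: L)
      also have "\<dots> = lam * (\<Sum>c\<in>UNIV. y $ k * B $ k $ c * y $ c)"
        by (simp add: sum_distrib_left mult_ac)
      finally show ?thesis .
    qed
    then show ?thesis by (simp only: sum_distrib_left)
  qed
  then show ?thesis by blast
qed

lemma det_zero_kernel:
  fixes M :: "'a::field^'m::finite^'m"
  shows "det M = 0 \<longleftrightarrow> (\<exists>y. y \<noteq> 0 \<and> M *v y = 0)"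
  using invertible_det_nz[of M] invertible_left_inverse[of M] matrix_left_invertible_ker[of M]
  by blast

lemma rank_lt_if_det0:
  fixes M :: "'a::field^'m::finite^'m"
  assumes "det M = 0"
  shows "rank M < CARD('m)"
proof -
  obtain y where y0: "y \<noteq> 0" and My: "M *v y = 0"
    using assms det_zero_kernel by blast
  obtain l where yl: "y $ l \<noteq> 0" using y0 by (auto simp: vec_eq_iff)
  let ?H = "{v::'a^'m. (\<Sum>d\<in>UNIV. v $ d * y $ d) = 0}"
  have sub: "vec.subspace ?H"
    unfolding vec.subspace_def
    by (auto simp: sum.distrib distrib_right mult.assoc simp flip: sum_distrib_left)
  have rows: "rows M \<subseteq> ?H"
  proof
    fix u assume "u \<in> rows M"
    then obtain i where "u = row i M" by (auto simp: rows_def)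
    moreover have "(M *v y) $ i = 0" using My by simp
    ultimately show "u \<in> ?H" by (simp add: matrix_vector_mult_def row_def)
  qed
  have notin: "axis l 1 \<notin> ?H"
    using yl by (simp add: axis_def if_distrib[of "\<lambda>u. u * _"] cong: if_cong)
  have "vec.span ?H = ?H" using sub by (simp only: vec.span_eq_iff)
  moreover have "?H \<subset> UNIV" using notin by blast
  ultimately have "vec.span ?H \<subset> vec.span (UNIV :: ('a^'m) set)"
    by (simp only: vec.span_UNIV)
  then have "vec.dim ?H < vec.dim (UNIV :: ('a^'m) set)"
    by (rule vec.dim_psubset)
  moreover have "vec.dim (rows M) \<le> vec.dim ?H"
    by (rule vec.dim_subset[OF rows])
  ultimately show ?thesis
    by (simp add: row_rank_def_gen card_cart_basis)
qed

lemma rank_ge_if_minor: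
  fixes M :: "'a::field^'m::finite^'m"
  assumes "det (rr M k v) \<noteq> 0"
  shows "CARD('m) - 1 \<le> rank M"
proof -
  let ?N = "rr M k v"
  have ind: "vec.independent (rows ?N)"
    using det_dependent_rows assms by blast
  have inj: "inj (\<lambda>i. row i ?N)"
    by (rule injI, rule ccontr) (use det_identical_rows assms in blast)
  let ?T = "(\<lambda>i. row i ?N) ` (UNIV - {k})"
  have T: "?T = (\<lambda>i. row i M) ` (UNIV - {k})"
    by (auto simp: rr_def row_def)
  have "vec.independent ?T"
    by (rule vec.independent_mono[OF ind]) (unfold rows_def, blast)
  moreover have "?T \<subseteq> rows M"
    unfolding T rows_def by blast
  ultimately have "card ?T \<le> vec.dim (rows M)"
    by (intro vec.independent_card_le_dim)
  moreover have "card ?T = CARD('m) - 1"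
  proof -
    have "inj_on (\<lambda>i. row i ?N) (UNIV - {k})" using inj by (rule inj_on_subset) simp
    then have "card ?T = card (UNIV - {k})" by (rule card_image)
    also have "\<dots> = CARD('m) - 1" by (simp add: card_Diff_singleton)
    finally show ?thesis .
  qed
  ultimately show ?thesis by (simp add: row_rank_def_gen)
qed



lemma sym_entry: "transpose M = M \<Longrightarrow> M $ r $ c = M $ c $ r"
  by (metis transpose_def vec_lambda_beta)

lemma mon_single1: "mon (Poly_Mapping.single i 1) (w :: 'b::comm_ring_1^'n::finite) = w $ i"
proof -
  have "mon (Poly_Mapping.single i 1) w = (\<Prod>l\<in>UNIV. if l = i then w $ l else 1)"
    unfolding mon_def by (rule prod.cong) (auto simp: lookup_single when_def)
  then show ?thesis by simp
qed

lemma mpeval_quadric: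
  fixes M :: "'a::comm_ring_1^'m::finite^'m"
  shows "mpeval id (quadric_poly M) y = (\<Sum>r\<in>UNIV. \<Sum>c\<in>UNIV. M $ r $ c * (y $ r * y $ c))"
proof -
  interpret hom_ctx "id :: 'a \<Rightarrow> 'a" by unfold_locales auto
  show ?thesis
    unfolding quadric_poly_def by (simp add: mpeval_sum mpeval_single mon_add mon_single1)
qed

lemma mpderiv_quadric:
  fixes M :: "'a::comm_ring_1^'m::finite^'m"
  shows "mpderiv_eval id j (quadric_poly M) y = (\<Sum>c\<in>UNIV. M $ j $ c * y $ c) + (\<Sum>r\<in>UNIV. M $ r $ j * y $ r)"
proof -
  interpret hom_ctx "\<lambda>a::'a. [:a:]" by unfold_locales auto
  have z: "coeff (zpt y j $ r * zpt y j $ c) 1 = y $ r * (if c = j then 1 else 0) + (if r = j then 1 else 0) * y $ c" for r c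
    by (simp add: zpt_def coeff_mult_1)
  have "mpderiv_eval id j (quadric_poly M) y = coeff (mpeval (\<lambda>a. [:a:]) (quadric_poly M) (zpt y j)) 1"
    using mpderiv_via_poly[of id "quadric_poly M" y j] by simp
  also have "\<dots> = (\<Sum>r\<in>UNIV. \<Sum>c\<in>UNIV. M $ r $ c * (y $ r * (if c = j then 1 else 0) + (if r = j then 1 else 0) * y $ c))"
    unfolding quadric_poly_def by (simp add: mpeval_sum mpeval_single mon_add mon_single1 coeff_sum z)
  also have "\<dots> = (\<Sum>r\<in>UNIV. M $ r $ j * y $ r) + (\<Sum>c\<in>UNIV. M $ j $ c * y $ c)"
  proof -
    have a: "(\<Sum>c\<in>UNIV. M $ r $ c * (y $ r * (if c = j then 1 else 0))) = M $ r $ j * y $ r" for r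
    proof -
      have "(\<Sum>c\<in>UNIV. M $ r $ c * (y $ r * (if c = j then 1 else 0))) = (\<Sum>c\<in>UNIV. if c = j then M $ r $ j * y $ r else 0)"
        by (rule sum.cong) auto
      then show ?thesis by simp
    qed
    have b: "(\<Sum>c\<in>UNIV. M $ r $ c * ((if r = j then 1 else 0) * y $ c)) = (if r = j then (\<Sum>c\<in>UNIV. M $ j $ c * y $ c) else 0)" for r
      by (cases "r = j") simp_all
    show ?thesis
      by (simp only: distrib_left sum.distrib a b) simp
  qed
  finally show ?thesis by (simp add: ac_simps)
qed

lemma quadric_sing_iff:
  fixes M :: "'a::field^'m::finite^'m"
  assumes sym: "transpose M = M" and two: "(2::'a) \<noteq> 0"
  shows "quadric_sing_point M y \<longleftrightarrow> y \<noteq> 0 \<and> M *v y = 0"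
proof -
  have mv: "(M *v y) $ j = (\<Sum>c\<in>UNIV. M $ j $ c * y $ c)" for j
    by (simp add: matrix_vector_mult_def)
  have d: "mpderiv_eval id j (quadric_poly M) y = 2 * (M *v y) $ j" for j
  proof -
    have "(\<Sum>r\<in>UNIV. M $ r $ j * y $ r) = (\<Sum>r\<in>UNIV. M $ j $ r * y $ r)"
      by (rule sum.cong[OF refl], rule arg_cong[where f="\<lambda>u. u * _"], rule sym_entry[OF sym])
    then show ?thesis
      unfolding mpderiv_quadric mv mult_2 by simp
  qed
  have e: "mpeval id (quadric_poly M) y = (\<Sum>r\<in>UNIV. y $ r * (M *v y) $ r)"
    unfolding mpeval_quadric mv sum_distrib_left
    by (rule sum.cong[OF refl], rule sum.cong[OF refl]) (simp only: mult_ac)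
  show ?thesis
    unfolding quadric_sing_point_def d e using two by (auto simp: vec_eq_iff)
qed

lemma sum_two_point:
  fixes f :: "'n::finite \<Rightarrow> 'a::comm_ring_1"
  assumes "i \<noteq> j"
  shows "(\<Sum>t\<in>UNIV. f t * (if t = i then a else if t = j then b else 0)) = f i * a + f j * b"
proof -
  have "(\<Sum>t\<in>UNIV. f t * (if t = i then a else if t = j then b else 0)) =
        (\<Sum>t\<in>UNIV. (if t = i then f i * a else 0) + (if t = j then f j * b else 0))"
    by (rule sum.cong) (use assms in auto)
  then show ?thesis by (simp add: sum.distrib)
qed

lemma perp_multiple:
  fixes h v :: "'a::field^'n::finite"
  assumes h0: "h \<noteq> 0"
    and perp: "\<forall>x. x \<noteq> 0 \<and> (\<Sum>i\<in>UNIV. h $ i * x $ i) = 0 \<longrightarrow> (\<Sum>i\<in>UNIV. x $ i * v $ i) = 0"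
  shows "\<exists>c. v = c *s h"
proof -
  obtain j where hj: "h $ j \<noteq> 0" using h0 by (auto simp: vec_eq_iff)
  have all: "v $ i = (v $ j / h $ j) * h $ i" for i
  proof (cases "i = j")
    case True
    then show ?thesis using hj by simp
  next
    case False
    define x :: "'a^'n" where "x = (\<chi> t. if t = i then h $ j else if t = j then - h $ i else 0)"
    have "x $ i = h $ j" by (simp add: x_def)
    then have x0: "x \<noteq> 0" using hj by auto
    have "(\<Sum>t\<in>UNIV. h $ t * x $ t) = h $ i * h $ j + h $ j * (- h $ i)"
      unfolding x_def using sum_two_point[OF False, of "\<lambda>t. h $ t" "h $ j" "- h $ i"]
      by simp
    then have hx: "(\<Sum>t\<in>UNIV. h $ t * x $ t) = 0" by (simp add: mult.commute)
    have "(\<Sum>t\<in>UNIV. x $ t * v $ t) = 0" using perp x0 hx by blast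
    moreover have "(\<Sum>t\<in>UNIV. x $ t * v $ t) = (\<Sum>t\<in>UNIV. v $ t * x $ t)"
      by (simp add: mult.commute)
    moreover have "(\<Sum>t\<in>UNIV. v $ t * x $ t) = v $ i * h $ j + v $ j * (- h $ i)"
      unfolding x_def using sum_two_point[OF False, of "\<lambda>t. v $ t" "h $ j" "- h $ i"]
      by simp
    ultimately have eq: "v $ i * h $ j = v $ j * h $ i" by simp
    have "v $ i = (v $ i * h $ j) / h $ j" using hj by simp
    also have "\<dots> = (v $ j * h $ i) / h $ j" by (simp only: eq)
    finally show ?thesis by simp
  qed
  have "v = (v $ j / h $ j) *s h"
    unfolding vec_eq_iff vector_smult_component using all by blast
  then show ?thesis by blast
qed



lemma pencil_sym:
  assumes "\<forall>i. transpose (A i) = A i"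
  shows "transpose (pencil \<sigma> A x) = pencil \<sigma> A x"
proof -
  have s: "A i $ c $ r = A i $ r $ c" for i r c
    by (rule sym_entry) (use assms in blast)
  show ?thesis
    unfolding vec_eq_iff
  proof (intro allI)
    fix r c
    show "transpose (pencil \<sigma> A x) $ r $ c = pencil \<sigma> A x $ r $ c"
    proof -
      have "transpose (pencil \<sigma> A x) $ r $ c = (\<Sum>i\<in>UNIV. x $ i * \<sigma> (A i $ c $ r))"
        by (simp add: transpose_def pencil_def)
      also have "\<dots> = (\<Sum>i\<in>UNIV. x $ i * \<sigma> (A i $ r $ c))"
        by (rule sum.cong[OF refl]) (simp only: s[of _ c r])
      also have "\<dots> = pencil \<sigma> A x $ r $ c"
        by (simp add: pencil_def)
      finally show ?thesis .
    qed
  qed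
qed

lemma det_eval:
  assumes "\<forall>a b. \<sigma> (a + b) = \<sigma> a + \<sigma> b" "\<forall>a b. \<sigma> (a * b) = \<sigma> a * \<sigma> b" "\<sigma> 1 = 1"
  shows "mpeval \<sigma> (det_poly A) x = det (pencil \<sigma> A x)"
proof -
  interpret hom_ctx \<sigma> by (rule hom_ctx_id[OF assms])
  show ?thesis
  proof -
    have "mpeval \<sigma> (det_poly A) x = det (\<chi> r c. mpeval \<sigma> (pencil_poly A $ r $ c) x)"
      by (simp only: det_poly_def mpeval_det)
    also have "(\<chi> r c. mpeval \<sigma> (pencil_poly A $ r $ c) x) = pencil \<sigma> A x"
      unfolding vec_eq_iff pencil_def by (simp add: mpeval_pencil_entry mult.commute)
    finally show ?thesis .
  qed
qed

lemma grad_eval: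
  fixes \<sigma> :: "'k::comm_ring_1 \<Rightarrow> 'K::comm_ring_1" and A :: "'n::finite \<Rightarrow> 'k^'m::finite^'m"
  assumes "\<forall>a b. \<sigma> (a + b) = \<sigma> a + \<sigma> b" "\<forall>a b. \<sigma> (a * b) = \<sigma> a * \<sigma> b" "\<sigma> 1 = 1"
  shows "mpderiv_eval \<sigma> j (det_poly A) x =
    (\<Sum>k\<in>UNIV. det (rr (pencil \<sigma> A x) k ((\<chi> r c. \<sigma> (A j $ r $ c)) $ k)))"
proof -
  interpret hom_ctx "\<lambda>a. [:\<sigma> a:]" by (rule hom_ctx_const[OF assms])
  let ?P = "(\<chi> r c. mpeval (\<lambda>a. [:\<sigma> a:]) (pencil_poly A $ r $ c) (zpt x j)) :: 'K poly^'m^'m"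
  have c0: "coeff (?P $ r $ c) 0 = pencil \<sigma> A x $ r $ c" for r c
    by (simp add: mpeval_pencil_entry coeff_sum zpt_def pencil_def mult.commute)
  have c1: "coeff (?P $ r $ c) 1 = \<sigma> (A j $ r $ c)" for r c
  proof -
    have "coeff (?P $ r $ c) 1 = (\<Sum>i\<in>UNIV. \<sigma> (A i $ r $ c) * (if i = j then 1 else 0))"
      by (simp add: mpeval_pencil_entry coeff_sum zpt_def mult.commute)
    also have "\<dots> = (\<Sum>i\<in>UNIV. if i = j then \<sigma> (A j $ r $ c) else 0)"
      by (rule sum.cong) auto
    finally show ?thesis by simp
  qed
  have "mpderiv_eval \<sigma> j (det_poly A) x = coeff (mpeval (\<lambda>a. [:\<sigma> a:]) (det_poly A) (zpt x j)) 1"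
    by (rule mpderiv_via_poly[symmetric])
  also have "\<dots> = coeff (det ?P) 1"
    unfolding det_poly_def mpeval_det ..
  also have "\<dots> = (\<Sum>k\<in>UNIV. det (\<chi> i. if i = k then (\<chi> c. coeff (?P$k$c) 1) else (\<chi> c. coeff (?P$i$c) 0)))"
    by (rule coeff_det_1)
  also have "\<dots> = (\<Sum>k\<in>UNIV. det (rr (pencil \<sigma> A x) k ((\<chi> r c. \<sigma> (A j $ r $ c)) $ k)))"
  proof (rule sum.cong[OF refl])
    fix k
    have "(\<chi> i. if i = k then (\<chi> c. coeff (?P$k$c) 1) else (\<chi> c. coeff (?P$i$c) 0)) =
          rr (pencil \<sigma> A x) k ((\<chi> r c. \<sigma> (A j $ r $ c)) $ k)"
      using c0 c1 unfolding vec_eq_iff rr_def by simp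
    then show "det (\<chi> i. if i = k then (\<chi> c. coeff (?P$k$c) 1) else (\<chi> c. coeff (?P$i$c) 0)) =
          det (rr (pencil \<sigma> A x) k ((\<chi> r c. \<sigma> (A j $ r $ c)) $ k))" by simp
  qed
  finally show ?thesis .
qed

lemma quad_eval:
  fixes \<sigma> :: "'k::comm_ring_1 \<Rightarrow> 'K::comm_ring_1" and A :: "'n::finite \<Rightarrow> 'k^'m::finite^'m"
  shows "mpeval id (quadric_poly (pencil \<sigma> A x)) y = (\<Sum>i\<in>UNIV. x $ i * psi \<sigma> A y $ i)"
proof -
  have "mpeval id (quadric_poly (pencil \<sigma> A x)) y =
     (\<Sum>r\<in>UNIV. \<Sum>c\<in>UNIV. (\<Sum>i\<in>UNIV. x $ i * \<sigma> (A i $ r $ c)) * (y $ r * y $ c))"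
    by (simp add: mpeval_quadric pencil_def)
  also have "\<dots> = (\<Sum>r\<in>UNIV. \<Sum>c\<in>UNIV. \<Sum>i\<in>UNIV. x $ i * (y $ r * \<sigma> (A i $ r $ c) * y $ c))"
    by (intro sum.cong refl) (simp add: sum_distrib_right mult_ac, simp add: sum_distrib_left)
  also have "\<dots> = (\<Sum>r\<in>UNIV. \<Sum>i\<in>UNIV. \<Sum>c\<in>UNIV. x $ i * (y $ r * \<sigma> (A i $ r $ c) * y $ c))"
    by (intro sum.cong refl) (rule sum.swap)
  also have "\<dots> = (\<Sum>i\<in>UNIV. \<Sum>r\<in>UNIV. \<Sum>c\<in>UNIV. x $ i * (y $ r * \<sigma> (A i $ r $ c) * y $ c))"
    by (rule sum.swap)
  also have "\<dots> = (\<Sum>i\<in>UNIV. x $ i * psi \<sigma> A y $ i)"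
    by (simp add: psi_def sum_distrib_left)
  finally show ?thesis .
qed



theorem proposition2p0p2:
  fixes \<sigma> :: "'k::field \<Rightarrow> 'K::field"
    and A :: "'n::finite \<Rightarrow> 'k^'m::finite^'m"
  assumes char2: "(2::'k) \<noteq> 0" and char3: "(3::'k) \<noteq> 0"
    and hom_add: "\<forall>a b. \<sigma> (a + b) = \<sigma> a + \<sigma> b"
    and hom_mult: "\<forall>a b. \<sigma> (a * b) = \<sigma> a * \<sigma> b"
    and hom_one: "\<sigma> 1 = 1"
    and alg_closed: "\<forall>p::'K poly. degree p > 0 \<longrightarrow> (\<exists>z. poly p z = 0)"
    and algebraic: "\<forall>z::'K. \<exists>p::'k poly. p \<noteq> 0 \<and> poly (map_poly \<sigma> p) z = 0"
    and sym: "\<forall>i. transpose (A i) = A i"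
    and reduced: "squarefree (det_poly A)"
    and irred: "irreducible (det_poly A)"
  shows
    "(\<forall>x. smooth_point \<sigma> (det_poly A) x \<longrightarrow>
        rank (pencil \<sigma> A x) = CARD('m) - 1 \<and>
        (\<forall>y. y \<noteq> 0 \<and> pencil \<sigma> A x *v y = 0 \<longrightarrow>
             proj_eq (grad_vec \<sigma> (det_poly A) x) (psi \<sigma> A y)))
     \<and> (\<forall>x::'K^'n. x \<noteq> 0 \<longrightarrow> (singular_quadric (pencil \<sigma> A x) \<longleftrightarrow> x \<in> symmetroid \<sigma> A))
     \<and> (\<forall>x y. x \<in> symmetroid \<sigma> A \<and> rank (pencil \<sigma> A x) = CARD('m) - 1 \<and>
             y \<noteq> 0 \<and> pencil \<sigma> A x *v y = 0 \<longrightarrow> quadric_sing_point (pencil \<sigma> A x) y)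
     \<and> (\<forall>h::'K^'n. h \<noteq> 0 \<longrightarrow>
          {y::'K^'m. y \<noteq> 0 \<and> (\<exists>c. psi \<sigma> A y = c *s h)} =
          {y. y \<noteq> 0 \<and> (\<forall>x::'K^'n. x \<noteq> 0 \<and> (\<Sum>i\<in>UNIV. h $ i * x $ i) = 0 \<longrightarrow>
                  mpeval id (quadric_poly (pencil \<sigma> A x)) y = 0)})"
proof -
  interpret hom_ctx \<sigma> by (rule hom_ctx_id[OF hom_add hom_mult hom_one])
  have two: "(2::'K) \<noteq> 0"
  proof
    assume h2: "(2::'K) = 0"
    have "\<sigma> 2 = 2" using hom_add[rule_format, of 1 1] hom_one by simp
    then have s2: "\<sigma> 2 = 0" using h2 by simp
    have "\<sigma> (2 * inverse 2) = \<sigma> 2 * \<sigma> (inverse 2)" using hom_mult by blast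
    also have "\<dots> = 0" using s2 by simp
    finally have "\<sigma> (2 * inverse 2) = 0" .
    moreover have "(2::'k) * inverse 2 = 1" using char2 by simp
    ultimately show False using hom_one by simp
  qed
  have symP: "transpose (pencil \<sigma> A x) = pencil \<sigma> A x" for x
    by (rule pencil_sym[OF sym])
  have detE: "mpeval \<sigma> (det_poly A) x = det (pencil \<sigma> A x)" for x
    by (rule det_eval[OF hom_add hom_mult hom_one])
  have gradE: "mpderiv_eval \<sigma> j (det_poly A) x =
    (\<Sum>k\<in>UNIV. det (rr (pencil \<sigma> A x) k ((\<chi> r c. \<sigma> (A j $ r $ c)) $ k)))" for x j
    by (rule grad_eval[OF hom_add hom_mult hom_one])
  have psiE: "psi \<sigma> A y $ j = (\<Sum>r\<in>UNIV. \<Sum>c\<in>UNIV. y $ r * (\<chi> r c. \<sigma> (A j $ r $ c)) $ r $ c * y $ c)" for y j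
    by (simp add: psi_def)
  have P1: "\<forall>x. smooth_point \<sigma> (det_poly A) x \<longrightarrow>
        rank (pencil \<sigma> A x) = CARD('m) - 1 \<and>
        (\<forall>y. y \<noteq> 0 \<and> pencil \<sigma> A x *v y = 0 \<longrightarrow>
             proj_eq (grad_vec \<sigma> (det_poly A) x) (psi \<sigma> A y))"
  proof (intro allI impI)
    fix x assume sm: "smooth_point \<sigma> (det_poly A) x"
    let ?M = "pencil \<sigma> A x"
    have d0: "det ?M = 0" using sm detE by (simp add: smooth_point_def)
    obtain j where gj: "mpderiv_eval \<sigma> j (det_poly A) x \<noteq> 0"
      using sm by (auto simp: smooth_point_def)
    then obtain k where dk: "det (rr ?M k ((\<chi> r c. \<sigma> (A j $ r $ c)) $ k)) \<noteq> 0"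
      unfolding gradE by (metis (mono_tags, lifting) sum.neutral)
    have "CARD('m) - 1 \<le> rank ?M" by (rule rank_ge_if_minor[OF dk])
    moreover have "rank ?M < CARD('m)" by (rule rank_lt_if_det0[OF d0])
    ultimately have rk: "rank ?M = CARD('m) - 1" by linarith
    have pe: "proj_eq (grad_vec \<sigma> (det_poly A) x) (psi \<sigma> A y)" if y0: "y \<noteq> 0" and My: "?M *v y = 0" for y
    proof -
      obtain lam where L: "\<forall>B. (\<Sum>k\<in>UNIV. det (rr ?M k (B $ k))) = lam * (\<Sum>r\<in>UNIV. \<Sum>c\<in>UNIV. y $ r * B $ r $ c * y $ c)"
        using deriv_rank1[OF symP My y0] by blast
      have G: "grad_vec \<sigma> (det_poly A) x = lam *s psi \<sigma> A y"
        unfolding vec_eq_iff grad_vec_def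
      proof
        fix i
        show "(\<chi> j. mpderiv_eval \<sigma> j (det_poly A) x) $ i = (lam *s psi \<sigma> A y) $ i"
        proof -
          have "(\<Sum>k\<in>UNIV. det (rr ?M k ((\<chi> r c. \<sigma> (A i $ r $ c)) $ k))) =
            lam * (\<Sum>r\<in>UNIV. \<Sum>c\<in>UNIV. y $ r * (\<chi> r c. \<sigma> (A i $ r $ c)) $ r $ c * y $ c)"
            by (rule L[rule_format])
          then show ?thesis
            unfolding vec_lambda_beta vector_smult_component gradE psiE by simp
        qed
      qed
      have g0: "grad_vec \<sigma> (det_poly A) x \<noteq> 0"
        using gj by (auto simp: grad_vec_def vec_eq_iff)
      then have "lam \<noteq> 0" and "psi \<sigma> A y \<noteq> 0" using G by auto
      then show ?thesis unfolding proj_eq_def using G g0 by blast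
    qed
    show "rank ?M = CARD('m) - 1 \<and> (\<forall>y. y \<noteq> 0 \<and> ?M *v y = 0 \<longrightarrow>
             proj_eq (grad_vec \<sigma> (det_poly A) x) (psi \<sigma> A y))"
      using rk pe by blast
  qed
  have P2: "\<forall>x::'K^'n. x \<noteq> 0 \<longrightarrow> (singular_quadric (pencil \<sigma> A x) \<longleftrightarrow> x \<in> symmetroid \<sigma> A)"
  proof (intro allI impI)
    fix x :: "'K^'n" assume x0: "x \<noteq> 0"
    have "singular_quadric (pencil \<sigma> A x) \<longleftrightarrow> (\<exists>y. y \<noteq> 0 \<and> pencil \<sigma> A x *v y = 0)"
      unfolding singular_quadric_def quadric_sing_iff[OF symP two] ..
    also have "\<dots> \<longleftrightarrow> det (pencil \<sigma> A x) = 0"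
      by (rule det_zero_kernel[symmetric])
    also have "\<dots> \<longleftrightarrow> x \<in> symmetroid \<sigma> A"
      using x0 by (simp add: symmetroid_def detE)
    finally show "singular_quadric (pencil \<sigma> A x) \<longleftrightarrow> x \<in> symmetroid \<sigma> A" .
  qed
  have P3: "\<forall>x y. x \<in> symmetroid \<sigma> A \<and> rank (pencil \<sigma> A x) = CARD('m) - 1 \<and>
             y \<noteq> 0 \<and> pencil \<sigma> A x *v y = 0 \<longrightarrow> quadric_sing_point (pencil \<sigma> A x) y"
    using quadric_sing_iff[OF symP two] by blast
  have P4: "\<forall>h::'K^'n. h \<noteq> 0 \<longrightarrow>
          {y::'K^'m. y \<noteq> 0 \<and> (\<exists>c. psi \<sigma> A y = c *s h)} =
          {y. y \<noteq> 0 \<and> (\<forall>x::'K^'n. x \<noteq> 0 \<and> (\<Sum>i\<in>UNIV. h $ i * x $ i) = 0 \<longrightarrow>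
                  mpeval id (quadric_poly (pencil \<sigma> A x)) y = 0)}"
  proof (intro allI impI)
    fix h :: "'K^'n" assume h0: "h \<noteq> 0"
    show "{y::'K^'m. y \<noteq> 0 \<and> (\<exists>c. psi \<sigma> A y = c *s h)} =
          {y. y \<noteq> 0 \<and> (\<forall>x::'K^'n. x \<noteq> 0 \<and> (\<Sum>i\<in>UNIV. h $ i * x $ i) = 0 \<longrightarrow>
                  mpeval id (quadric_poly (pencil \<sigma> A x)) y = 0)}"
      unfolding quad_eval
    proof (intro equalityI subsetI)
      fix y assume "y \<in> {y::'K^'m. y \<noteq> 0 \<and> (\<exists>c. psi \<sigma> A y = c *s h)}"
      then obtain c where y0: "y \<noteq> 0" and pc: "psi \<sigma> A y = c *s h" by blast
      have "(\<Sum>i\<in>UNIV. x $ i * psi \<sigma> A y $ i) = 0" if "(\<Sum>i\<in>UNIV. h $ i * x $ i) = 0" for x :: "'K^'n"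
      proof -
        have "(\<Sum>i\<in>UNIV. x $ i * psi \<sigma> A y $ i) = c * (\<Sum>i\<in>UNIV. h $ i * x $ i)"
          unfolding pc by (simp add: sum_distrib_left mult_ac)
        then show ?thesis using that by simp
      qed
      then show "y \<in> {y. y \<noteq> 0 \<and> (\<forall>x::'K^'n. x \<noteq> 0 \<and> (\<Sum>i\<in>UNIV. h $ i * x $ i) = 0 \<longrightarrow>
                  (\<Sum>i\<in>UNIV. x $ i * psi \<sigma> A y $ i) = 0)}"
        using y0 by blast
    next
      fix y assume "y \<in> {y. y \<noteq> 0 \<and> (\<forall>x::'K^'n. x \<noteq> 0 \<and> (\<Sum>i\<in>UNIV. h $ i * x $ i) = 0 \<longrightarrow>
                  (\<Sum>i\<in>UNIV. x $ i * psi \<sigma> A y $ i) = 0)}"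
      then have y0: "y \<noteq> 0" and perp: "\<forall>x::'K^'n. x \<noteq> 0 \<and> (\<Sum>i\<in>UNIV. h $ i * x $ i) = 0 \<longrightarrow>
                  (\<Sum>i\<in>UNIV. x $ i * psi \<sigma> A y $ i) = 0" by blast+
      obtain c where "psi \<sigma> A y = c *s h" using perp_multiple[OF h0 perp] by blast
      then show "y \<in> {y::'K^'m. y \<noteq> 0 \<and> (\<exists>c. psi \<sigma> A y = c *s h)}" using y0 by blast
    qed
  qed
  show ?thesis using P1 P2 P3 P4 by blast
qed

end
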